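(* Let $\mathcal G$ be a shortest-path game in which $\mathrm{Val}^{\mathrm d}(v)\neq+\infty$ and $\overline{\mathrm{Val}}^{\mathrm m}(v)\neq+\infty$ for all vertices $v$, and let $\rho$ be a memoryless strategy of Min such that $\mathbb P^{\rho,\tau}_v(\Diamond T)=1$ for every vertex $v$ and every memoryless strategy $\tau$ of Max. Let $\widetilde{\mathcal G}$ and $\sigma_1$ be as defined below. Then $\sigma_1$ is an NC-strategy: every cycle of $\widetilde{\mathcal G}$ conforming to $\sigma_1$ has negative total weight.
   Context: A shortest-path game is $\mathcal G=(V_{\mathrm{Max}},V_{\mathrm{Min}},T,E,w)$ with finite $V=V_{\mathrm{Max}}\uplus V_{\mathrm{Min}}\uplus T$, edges $E\subseteq (V\setminus T)\times V$ with every non-target vertex having a successor, and integer weights $w\colon E\to\mathbb Z$. Plays from $v$ are finite paths ending at their first visit to $T$ (total payoff $\mathrm{TP}$ = sum of weights) or infinite paths avoiding $T$ ($\mathrm{TP}=+\infty$). Strategies of Min (resp. Max) map finite paths ending in $V_{\mathrm{Min}}$ (resp. $V_{\mathrm{Max}}$) to distributions on successors of the last vertex; deterministic = always Dirac, memoryless = depends only on the last vertex. $\mathrm{Val}^{\mathrm d}(v)=\inf_\sigma\sup_\tau\mathrm{TP}(\text{unique play from } v \text{ conforming to }\sigma,\tau)$ over deterministic strategies. For memoryless $\rho,\tau$, $\mathbb P^{\rho,\tau}_v,\mathbb E^{\rho,\tau}_v$ refer to the induced Markov chain; $\mathrm{Val}^{\mathrm m,\rho}(v)=\sup_\tau\mathbb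 E^{\rho,\tau}_v(\mathrm{TP})$ over memoryless $\tau$, $\overline{\mathrm{Val}}^{\mathrm m}(v)=\inf_\rho\mathrm{Val}^{\mathrm m,\rho}(v)$. For $v\in V_{\mathrm{Min}}$ let $\widetilde E(v)=\arg\min_{v'\in\mathrm{supp}(\rho(v))}\big[w(v,v')+\mathrm{Val}^{\mathrm m,\rho}(v')\big]$, and let $\widetilde{\mathcal G}$ be obtained from $\mathcal G$ by removing every edge $(v,v')$ with $v\in V_{\mathrm{Min}}$, $v'\notin\widetilde E(v)$. Let $d(v)$ be the attractor distance to $T$ in the graph where Min vertices $v$ only use edges to $\mathrm{supp}(\rho(v))$: $d(v)=0$ for $v\in T$, and $d$ is the least function with $d(v)=1+\min_{v'\in\mathrm{supp}(\rho(v))}d(v')$ for $v\in V_{\mathrm{Min}}$ and $d(v)=1+\max_{v'\in E(v)}d(v')$ for $v\in V_{\mathrm{Max}}$. Let $\sigma_1$ be the memoryless deterministic Min strategy with $\sigma_1(v)\in\arg\min_{v'\in\widetilde E(v)}d(v')$. A cycle conforms to $\sigma_1$ if every Min vertex $u$ on it is followed by $\sigma_1(u)$. *)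

theory Defs
  imports "HOL-Probability.Probability"
begin

text \<open>Weights w are given as an integer function on pairs (only relevant on E).\<close>

definition spg :: "'v set \<Rightarrow> 'v set \<Rightarrow> 'v set \<Rightarrow> ('v \<times> 'v) set \<Rightarrow> bool" where
  "spg VMax VMin T E \<longleftrightarrow> finite (VMax \<union> VMin \<union> T) \<and>
     VMax \<inter> VMin = {} \<and> VMax \<inter> T = {} \<and> VMin \<inter> T = {} \<and>
     E \<subseteq> (VMax \<union> VMin) \<times> (VMax \<union> VMin \<union> T) \<and>
     (\<forall>v \<in> VMax \<union> VMin. \<exists>v'. (v, v') \<in> E)"

fun tp_fin :: "'v set \<Rightarrow> ('v \<Rightarrow> 'v \<Rightarrow> int) \<Rightarrow> 'v list \<Rightarrow> int" where
  "tp_fin T w (u # u' # us) = (if u \<in> T then 0 else w u u' + tp_fin T w (u' # us))"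
| "tp_fin T w _ = 0"

definition det_strat :: "('v \<times> 'v) set \<Rightarrow> 'v set \<Rightarrow> ('v list \<Rightarrow> 'v) \<Rightarrow> bool" where
  "det_strat E P s \<longleftrightarrow> (\<forall>h. h \<noteq> [] \<and> last h \<in> P \<longrightarrow> (last h, s h) \<in> E)"

primrec det_prefix :: "'v set \<Rightarrow> 'v set \<Rightarrow> ('v list \<Rightarrow> 'v) \<Rightarrow> ('v list \<Rightarrow> 'v) \<Rightarrow> 'v \<Rightarrow> nat \<Rightarrow> 'v list" where
  "det_prefix VMin T \<sigma> \<tau> v 0 = [v]"
| "det_prefix VMin T \<sigma> \<tau> v (Suc n) =
     (let h = det_prefix VMin T \<sigma> \<tau> v n in
      if last h \<in> T then h else h @ [if last h \<in> VMin then \<sigma> h else \<tau> h])"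

definition det_TP :: "'v set \<Rightarrow> 'v set \<Rightarrow> ('v \<Rightarrow> 'v \<Rightarrow> int) \<Rightarrow> ('v list \<Rightarrow> 'v) \<Rightarrow> ('v list \<Rightarrow> 'v) \<Rightarrow> 'v \<Rightarrow> ereal" where
  "det_TP VMin T w \<sigma> \<tau> v =
     (if \<exists>n. last (det_prefix VMin T \<sigma> \<tau> v n) \<in> T
      then ereal (real_of_int (tp_fin T w (det_prefix VMin T \<sigma> \<tau> v
                 (LEAST n. last (det_prefix VMin T \<sigma> \<tau> v n) \<in> T))))
      else \<infinity>)"

definition val_d :: "'v set \<Rightarrow> 'v set \<Rightarrow> 'v set \<Rightarrow> ('v \<times> 'v) set \<Rightarrow> ('v \<Rightarrow> 'v \<Rightarrow> int) \<Rightarrow> 'v \<Rightarrow> ereal" where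
  "val_d VMax VMin T E w v =
     (INF \<sigma> \<in> {\<sigma>. det_strat E VMin \<sigma>}. SUP \<tau> \<in> {\<tau>. det_strat E VMax \<tau>}. det_TP VMin T w \<sigma> \<tau> v)"

definition ml_strat :: "('v \<times> 'v) set \<Rightarrow> 'v set \<Rightarrow> ('v \<Rightarrow> 'v pmf) \<Rightarrow> bool" where
  "ml_strat E P s \<longleftrightarrow> (\<forall>v \<in> P. set_pmf (s v) \<subseteq> E `` {v})"

definition mc_step :: "'v set \<Rightarrow> 'v set \<Rightarrow> ('v \<Rightarrow> 'v pmf) \<Rightarrow> ('v \<Rightarrow> 'v pmf) \<Rightarrow> 'v \<Rightarrow> 'v pmf" where
  "mc_step VMax VMin \<rho> \<tau> v =
     (if v \<in> VMin then \<rho> v else if v \<in> VMax then \<tau> v else return_pmf v)"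

primrec mc_paths :: "'v set \<Rightarrow> 'v set \<Rightarrow> ('v \<Rightarrow> 'v pmf) \<Rightarrow> ('v \<Rightarrow> 'v pmf) \<Rightarrow> 'v \<Rightarrow> nat \<Rightarrow> 'v list pmf" where
  "mc_paths VMax VMin \<rho> \<tau> v 0 = return_pmf [v]"
| "mc_paths VMax VMin \<rho> \<tau> v (Suc n) =
     bind_pmf (mc_paths VMax VMin \<rho> \<tau> v n)
       (\<lambda>h. map_pmf (\<lambda>u. h @ [u]) (mc_step VMax VMin \<rho> \<tau> (last h)))"

text \<open>P(eventually T) = limit (supremum) of the probabilities of reaching T within n steps.\<close>

definition reach_prob :: "'v set \<Rightarrow> 'v set \<Rightarrow> 'v set \<Rightarrow> ('v \<Rightarrow> 'v pmf) \<Rightarrow> ('v \<Rightarrow> 'v pmf) \<Rightarrow> 'v \<Rightarrow> real" where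
  "reach_prob VMax VMin T \<rho> \<tau> v =
     (SUP n. measure_pmf.prob (mc_paths VMax VMin \<rho> \<tau> v n) {h. \<exists>u \<in> set h. u \<in> T})"

text \<open>Expected total payoff: +\<infinity> if T is missed with positive probability (then TP = +\<infinity>
  on a set of positive measure), otherwise the limit of the expected payoffs of the
  n-step truncations (dominated convergence).\<close>

definition ETP :: "'v set \<Rightarrow> 'v set \<Rightarrow> 'v set \<Rightarrow> ('v \<Rightarrow> 'v \<Rightarrow> int) \<Rightarrow> ('v \<Rightarrow> 'v pmf) \<Rightarrow> ('v \<Rightarrow> 'v pmf) \<Rightarrow> 'v \<Rightarrow> ereal" where
  "ETP VMax VMin T w \<rho> \<tau> v =
     (if reach_prob VMax VMin T \<rho> \<tau> v = 1
      then ereal (lim (\<lambda>n. measure_pmf.expectation (mc_paths VMax VMin \<rho> \<tau> v n)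
                              (\<lambda>h. real_of_int (tp_fin T w h))))
      else \<infinity>)"

definition val_m_rho :: "'v set \<Rightarrow> 'v set \<Rightarrow> 'v set \<Rightarrow> ('v \<times> 'v) set \<Rightarrow> ('v \<Rightarrow> 'v \<Rightarrow> int) \<Rightarrow> ('v \<Rightarrow> 'v pmf) \<Rightarrow> 'v \<Rightarrow> ereal" where
  "val_m_rho VMax VMin T E w \<rho> v = (SUP \<tau> \<in> {\<tau>. ml_strat E VMax \<tau>}. ETP VMax VMin T w \<rho> \<tau> v)"

definition val_m_bar :: "'v set \<Rightarrow> 'v set \<Rightarrow> 'v set \<Rightarrow> ('v \<times> 'v) set \<Rightarrow> ('v \<Rightarrow> 'v \<Rightarrow> int) \<Rightarrow> 'v \<Rightarrow> ereal" where
  "val_m_bar VMax VMin T E w v = (INF \<rho> \<in> {\<rho>. ml_strat E VMin \<rho>}. val_m_rho VMax VMin T E w \<rho> v)"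

definition Etil :: "'v set \<Rightarrow> 'v set \<Rightarrow> 'v set \<Rightarrow> ('v \<times> 'v) set \<Rightarrow> ('v \<Rightarrow> 'v \<Rightarrow> int) \<Rightarrow> ('v \<Rightarrow> 'v pmf) \<Rightarrow> 'v \<Rightarrow> 'v set" where
  "Etil VMax VMin T E w \<rho> v =
     {v' \<in> set_pmf (\<rho> v). \<forall>v'' \<in> set_pmf (\<rho> v).
        ereal (real_of_int (w v v')) + val_m_rho VMax VMin T E w \<rho> v'
          \<le> ereal (real_of_int (w v v'')) + val_m_rho VMax VMin T E w \<rho> v''}"

definition Gtil_edges :: "'v set \<Rightarrow> 'v set \<Rightarrow> 'v set \<Rightarrow> ('v \<times> 'v) set \<Rightarrow> ('v \<Rightarrow> 'v \<Rightarrow> int) \<Rightarrow> ('v \<Rightarrow> 'v pmf) \<Rightarrow> ('v \<times> 'v) set" where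
  "Gtil_edges VMax VMin T E w \<rho> =
     {(v, v') \<in> E. v \<in> VMin \<longrightarrow> v' \<in> Etil VMax VMin T E w \<rho> v}"

definition attr_dist :: "'v set \<Rightarrow> 'v set \<Rightarrow> 'v set \<Rightarrow> ('v \<times> 'v) set \<Rightarrow> ('v \<Rightarrow> 'v pmf) \<Rightarrow> 'v \<Rightarrow> enat" where
  "attr_dist VMax VMin T E \<rho> =
     lfp (\<lambda>f v. if v \<in> T then 0
               else if v \<in> VMin then 1 + Min (f ` set_pmf (\<rho> v))
               else if v \<in> VMax then 1 + Max (f ` (E `` {v}))
               else 0)"

definition conf_cycle :: "('v \<times> 'v) set \<Rightarrow> 'v set \<Rightarrow> ('v \<Rightarrow> 'v) \<Rightarrow> 'v list \<Rightarrow> bool" where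
  "conf_cycle Ed VMin \<sigma> c \<longleftrightarrow> c \<noteq> [] \<and>
     (\<forall>i < length c. (c ! i, c ! (Suc i mod length c)) \<in> Ed \<and>
        (c ! i \<in> VMin \<longrightarrow> c ! (Suc i mod length c) = \<sigma> (c ! i)))"

definition cycle_weight :: "('v \<Rightarrow> 'v \<Rightarrow> int) \<Rightarrow> 'v list \<Rightarrow> int" where
  "cycle_weight w c = (\<Sum>i < length c. w (c ! i) (c ! (Suc i mod length c)))"

end

theory Submission
  imports Defs
begin


lemma my_integral_bind:
  fixes f :: "'b \<Rightarrow> real"
  assumes A: "finite A" and B: "finite B" and MB: "set_pmf M \<subseteq> B"
    and NA: "\<And>x. x \<in> set_pmf M \<Longrightarrow> set_pmf (N x) \<subseteq> A"
  shows "measure_pmf.expectation (bind_pmf M N) f = (\<Sum>x\<in>B. pmf M x * measure_pmf.expectation (N x) f)"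
proof -
  have s: "set_pmf (bind_pmf M N) \<subseteq> A" using NA by auto
  have "measure_pmf.expectation (bind_pmf M N) f = (\<Sum>h\<in>A. f h * pmf (bind_pmf M N) h)"
    using s by (intro integral_measure_pmf_real[OF A]) auto
  also have "\<dots> = (\<Sum>h\<in>A. f h * (\<Sum>x\<in>B. pmf (N x) h * pmf M x))"
  proof (intro sum.cong refl arg_cong2[where f="(*)"])
    fix h show "pmf (bind_pmf M N) h = (\<Sum>x\<in>B. pmf (N x) h * pmf M x)"
      unfolding pmf_bind using MB by (intro integral_measure_pmf_real[OF B]) (auto simp: set_pmf_eq)
  qed
  also have "\<dots> = (\<Sum>x\<in>B. pmf M x * (\<Sum>h\<in>A. f h * pmf (N x) h))"
    by (simp add: sum_distrib_left sum_distrib_right sum.swap[of _ A] mult_ac)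
  also have "\<dots> = (\<Sum>x\<in>B. pmf M x * measure_pmf.expectation (N x) f)"
  proof (intro sum.cong refl)
    fix x assume "x \<in> B"
    show "pmf M x * (\<Sum>h\<in>A. f h * pmf (N x) h) = pmf M x * measure_pmf.expectation (N x) f"
    proof (cases "x \<in> set_pmf M")
      case True
      then show ?thesis using NA[OF True] by (subst integral_measure_pmf_real[OF A]) auto
    next
      case False then show ?thesis by (simp add: set_pmf_eq)
    qed
  qed
  finally show ?thesis .
qed

lemma sum_rotate:
  assumes "0 < (k::nat)"
  shows "(\<Sum>i<k. f (Suc i mod k)) = (\<Sum>i<k. f i)"
proof -
  have "bij_betw (\<lambda>i. Suc i mod k) {..<k} {..<k}"
  proof (rule bij_betw_imageI)
    show "inj_on (\<lambda>i. Suc i mod k) {..<k}"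
    proof (rule inj_onI)
      fix x y assume "x \<in> {..<k}" "y \<in> {..<k}" "Suc x mod k = Suc y mod k"
      then show "x = y"
        by (cases "Suc x = k"; cases "Suc y = k") auto
    qed
    show "(\<lambda>i. Suc i mod k) ` {..<k} = {..<k}"
    proof
      show "(\<lambda>i. Suc i mod k) ` {..<k} \<subseteq> {..<k}" using assms by auto
      show "{..<k} \<subseteq> (\<lambda>i. Suc i mod k) ` {..<k}"
      proof
        fix j assume j: "j \<in> {..<k}"
        show "j \<in> (\<lambda>i. Suc i mod k) ` {..<k}"
        proof (cases j)
          case 0 then show ?thesis using assms by (intro image_eqI[of _ _ "k - 1"]) auto
        next
          case (Suc i) then show ?thesis using j by (intro image_eqI[of _ _ i]) auto
        qed
      qed
    qed
  qed
  then show ?thesis by (rule sum.reindex_bij_betw)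
qed



lemma expect_cong_pmf:
  fixes f g :: "'a \<Rightarrow> real"
  assumes "\<And>x. x \<in> set_pmf M \<Longrightarrow> f x = g x"
  shows "measure_pmf.expectation M f = measure_pmf.expectation M g"
  using assms by (intro integral_cong_AE) (auto simp: AE_measure_pmf_iff)

locale G_ctx =
  fixes VMax VMin T :: "'v set" and E :: "('v \<times> 'v) set" and w :: "'v \<Rightarrow> 'v \<Rightarrow> int"
    and \<rho> :: "'v \<Rightarrow> 'v pmf"
  assumes game: "spg VMax VMin T E" and rho: "ml_strat E VMin \<rho>"
begin

abbreviation "G \<equiv> VMax \<union> VMin \<union> T"
abbreviation "stp \<tau> \<equiv> mc_step VMax VMin \<rho> \<tau>"
abbreviation "ML \<equiv> {\<tau>. ml_strat E VMax \<tau>}"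
abbreviation "P \<tau> \<equiv> mc_paths VMax VMin \<rho> \<tau>"

lemma finG: "finite G" using game by (simp add: spg_def)
lemma disj: "VMax \<inter> VMin = {}" "VMax \<inter> T = {}" "VMin \<inter> T = {}" using game by (auto simp: spg_def)
lemma E_sub: "(s, u) \<in> E \<Longrightarrow> s \<in> VMax \<union> VMin \<and> u \<in> G" using game by (auto simp: spg_def)
lemma E_ex: "s \<in> VMax \<union> VMin \<Longrightarrow> \<exists>u. (s, u) \<in> E" using game by (auto simp: spg_def)

lemma stp_T: "s \<in> T \<Longrightarrow> stp \<tau> s = return_pmf s"
  using disj by (auto simp: mc_step_def)
lemma stp_Min: "s \<in> VMin \<Longrightarrow> stp \<tau> s = \<rho> s"
  by (auto simp: mc_step_def)
lemma stp_Max: "s \<in> VMax \<Longrightarrow> stp \<tau> s = \<tau> s"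
  using disj by (auto simp: mc_step_def)

lemma stp_supp: "\<tau> \<in> ML \<Longrightarrow> s \<in> VMax \<union> VMin \<Longrightarrow> set_pmf (stp \<tau> s) \<subseteq> E `` {s}"
proof -
  assume t: "\<tau> \<in> ML" and s: "s \<in> VMax \<union> VMin"
  show ?thesis
  proof (cases "s \<in> VMin")
    case True then show ?thesis using rho by (simp add: ml_strat_def stp_Min)
  next
    case False then have "s \<in> VMax" using s by auto
    then show ?thesis using t by (simp add: ml_strat_def stp_Max)
  qed
qed

lemma stp_G: "\<tau> \<in> ML \<Longrightarrow> s \<in> G \<Longrightarrow> set_pmf (stp \<tau> s) \<subseteq> G"
proof -
  assume t: "\<tau> \<in> ML" and s: "s \<in> G"
  show ?thesis
  proof (cases "s \<in> T")
    case True then show ?thesis by (simp add: stp_T)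
  next
    case False then have "s \<in> VMax \<union> VMin" using s by auto
    then show ?thesis using stp_supp[OF t] E_sub by blast
  qed
qed

lemma paths_len: "h \<in> set_pmf (P \<tau> v n) \<Longrightarrow> length h = Suc n \<and> hd h = v"
proof (induction n arbitrary: h)
  case 0 then show ?case by simp
next
  case (Suc n)
  then obtain h' u where "h' \<in> set_pmf (P \<tau> v n)" "h = h' @ [u]" by auto
  with Suc.IH[OF this(1)] show ?case by (cases h') auto
qed

lemma paths_G: "\<tau> \<in> ML \<Longrightarrow> v \<in> G \<Longrightarrow> h \<in> set_pmf (P \<tau> v n) \<Longrightarrow> set h \<subseteq> G"
proof (induction n arbitrary: h)
  case 0 then show ?case by simp
next
  case (Suc n)
  then obtain h' u where h': "h' \<in> set_pmf (P \<tau> v n)" "h = h' @ [u]"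
    and u: "u \<in> set_pmf (stp \<tau> (last h'))" by auto
  have "h' \<noteq> []" using paths_len[OF h'(1)] by auto
  have "set h' \<subseteq> G" using Suc.IH[OF Suc.prems(1,2) h'(1)] .
  then have "last h' \<in> G" using \<open>h' \<noteq> []\<close> by (meson last_in_set subsetD)
  then have "u \<in> G" using stp_G[OF Suc.prems(1)] u by auto
  then show ?case using Suc h' by auto
qed

lemma paths_front:
  "P \<tau> v (Suc n) = bind_pmf (stp \<tau> v) (\<lambda>u. map_pmf ((#) v) (P \<tau> u n))"
proof (induction n arbitrary: v)
  case 0 then show ?case by (simp add: map_pmf_def bind_return_pmf)
next
  case (Suc n)
  have "P \<tau> v (Suc (Suc n)) = bind_pmf (P \<tau> v (Suc n))
          (\<lambda>h. map_pmf (\<lambda>u. h @ [u]) (stp \<tau> (last h)))" by (simp only: mc_paths.simps)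
  also have "\<dots> = bind_pmf (stp \<tau> v) (\<lambda>u. bind_pmf (P \<tau> u n)
          (\<lambda>h. map_pmf (\<lambda>x. (v # h) @ [x]) (stp \<tau> (last (v # h)))))"
    by (simp only: Suc.IH bind_assoc_pmf bind_map_pmf)
  also have "\<dots> = bind_pmf (stp \<tau> v) (\<lambda>u. map_pmf ((#) v) (bind_pmf (P \<tau> u n)
          (\<lambda>h. map_pmf (\<lambda>x. h @ [x]) (stp \<tau> (last h)))))"
    unfolding map_bind_pmf
  proof (intro bind_pmf_cong refl)
    fix u h assume "h \<in> set_pmf (P \<tau> u n)"
    then have "h \<noteq> []" using paths_len by fastforce
    then show "map_pmf (\<lambda>x. (v # h) @ [x]) (stp \<tau> (last (v # h))) =
       map_pmf ((#) v) (map_pmf (\<lambda>x. h @ [x]) (stp \<tau> (last h)))"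
      by (simp add: pmf.map_comp o_def)
  qed
  also have "\<dots> = bind_pmf (stp \<tau> v) (\<lambda>u. map_pmf ((#) v) (P \<tau> u (Suc n)))" by simp
  finally show ?case .
qed

definition Bop :: "('v \<Rightarrow> 'v pmf) \<Rightarrow> ('v \<Rightarrow> real) \<Rightarrow> 'v \<Rightarrow> real" where
  "Bop \<tau> x s = (if s \<in> T then 0 else (\<Sum>u\<in>G. pmf (stp \<tau> s) u * (real_of_int (w s u) + x u)))"

definition Pop :: "('v \<Rightarrow> 'v pmf) \<Rightarrow> ('v \<Rightarrow> real) \<Rightarrow> 'v \<Rightarrow> real" where
  "Pop \<tau> x s = (if s \<in> T then 0 else (\<Sum>u\<in>G. pmf (stp \<tau> s) u * x u))"

lemma expect_paths:
  assumes t: "\<tau> \<in> ML"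
  shows "v \<in> G \<Longrightarrow> measure_pmf.expectation (P \<tau> v n) (\<lambda>h. real_of_int (tp_fin T w h))
           = (Bop \<tau> ^^ n) (\<lambda>_. 0) v"
proof (induction n arbitrary: v)
  case 0 then show ?case by simp
next
  case (Suc n)
  define A where "A = {h. set h \<subseteq> G \<and> length h = Suc (Suc n)}"
  have fA: "finite A" unfolding A_def using finG by (rule finite_lists_length_eq)
  have "measure_pmf.expectation (P \<tau> v (Suc n)) (\<lambda>h. real_of_int (tp_fin T w h))
    = (\<Sum>u\<in>G. pmf (stp \<tau> v) u * measure_pmf.expectation (map_pmf ((#) v) (P \<tau> u n))
          (\<lambda>h. real_of_int (tp_fin T w h)))"
    unfolding paths_front
  proof (rule my_integral_bind[OF fA finG stp_G[OF t Suc.prems]])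
    fix u assume u: "u \<in> set_pmf (stp \<tau> v)"
    then have "u \<in> G" using stp_G[OF t Suc.prems] by auto
    then show "set_pmf (map_pmf ((#) v) (P \<tau> u n)) \<subseteq> A"
      using paths_G[OF t] paths_len Suc.prems unfolding A_def by fastforce
  qed
  also have "\<dots> = Bop \<tau> ((Bop \<tau> ^^ n) (\<lambda>_. 0)) v"
  proof (cases "v \<in> T")
    case True
    have "measure_pmf.expectation (map_pmf ((#) v) (P \<tau> u n)) (\<lambda>h. real_of_int (tp_fin T w h)) = 0" for u
    proof -
      have "measure_pmf.expectation (map_pmf ((#) v) (P \<tau> u n)) (\<lambda>h. real_of_int (tp_fin T w h))
          = measure_pmf.expectation (P \<tau> u n) (\<lambda>h. 0)"
        unfolding integral_map_pmf
      proof (rule expect_cong_pmf)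
        fix h assume "h \<in> set_pmf (P \<tau> u n)"
        then obtain a h' where "h = a # h'" using paths_len by (cases h) fastforce+
        then show "real_of_int (tp_fin T w (v # h)) = 0" using True by simp
      qed
      then show ?thesis by simp
    qed
    then show ?thesis using True by (simp add: Bop_def)
  next
    case False
    have key: "pmf (stp \<tau> v) u * measure_pmf.expectation (map_pmf ((#) v) (P \<tau> u n)) (\<lambda>h. real_of_int (tp_fin T w h))
          = pmf (stp \<tau> v) u * (real_of_int (w v u) + (Bop \<tau> ^^ n) (\<lambda>_. 0) u)" if uG: "u \<in> G" for u
    proof -
        have "measure_pmf.expectation (map_pmf ((#) v) (P \<tau> u n)) (\<lambda>h. real_of_int (tp_fin T w h))
          = measure_pmf.expectation (P \<tau> u n) (\<lambda>x. real_of_int (w v u) + real_of_int (tp_fin T w x))"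
          unfolding integral_map_pmf
        proof (rule expect_cong_pmf)
          fix h assume "h \<in> set_pmf (P \<tau> u n)"
          then obtain h' where "h = u # h'" using paths_len by (cases h) fastforce+
          then show "real_of_int (tp_fin T w (v # h)) = real_of_int (w v u) + real_of_int (tp_fin T w h)"
            using False by simp
        qed
        also have "\<dots> = real_of_int (w v u) + measure_pmf.expectation (P \<tau> u n) (\<lambda>x. real_of_int (tp_fin T w x))"
        proof -
          have fin: "finite (set_pmf (P \<tau> u n))"
            by (rule finite_subset[OF _ finite_lists_length_eq[OF finG, of "Suc n"]])
               (use paths_G[OF t uG] paths_len in blast)
          show ?thesis
            by (subst Bochner_Integration.integral_add) (auto intro: integrable_measure_pmf_finite[OF fin])
        qed
        also have "\<dots> = real_of_int (w v u) + (Bop \<tau> ^^ n) (\<lambda>_. 0) u" using Suc.IH[OF uG] by simp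
        finally show ?thesis by simp
    qed
    have "Bop \<tau> ((Bop \<tau> ^^ n) (\<lambda>_. 0)) v = (\<Sum>u\<in>G. pmf (stp \<tau> v) u * (real_of_int (w v u) + (Bop \<tau> ^^ n) (\<lambda>_. 0) u))"
      by (simp only: Bop_def[of \<tau> "(Bop \<tau> ^^ n) (\<lambda>_. 0)" v] if_not_P[OF False])
    moreover have "(\<Sum>u\<in>G. pmf (stp \<tau> v) u * measure_pmf.expectation (map_pmf ((#) v) (P \<tau> u n)) (\<lambda>h. real_of_int (tp_fin T w h)))
       = (\<Sum>u\<in>G. pmf (stp \<tau> v) u * (real_of_int (w v u) + (Bop \<tau> ^^ n) (\<lambda>_. 0) u))"
      by (rule sum.cong[OF refl key])
    ultimately show ?thesis by (simp only:)
  qed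
  finally show ?case by simp
qed

end


lemma Min_mono_img:
  fixes f g :: "'a \<Rightarrow> 'b::linorder"
  assumes "finite S" "S \<noteq> {}" "\<And>x. x \<in> S \<Longrightarrow> f x \<le> g x"
  shows "Min (f ` S) \<le> Min (g ` S)"
proof -
  have "Min (g ` S) \<in> g ` S" using assms by (intro Min_in) auto
  then obtain y where y: "y \<in> S" "Min (g ` S) = g y" by auto
  have "Min (f ` S) \<le> f y" using assms y by auto
  then show ?thesis using assms(3)[OF y(1)] y by simp
qed

lemma Max_mono_img:
  fixes f g :: "'a \<Rightarrow> 'b::linorder"
  assumes "finite S" "S \<noteq> {}" "\<And>x. x \<in> S \<Longrightarrow> f x \<le> g x"
  shows "Max (f ` S) \<le> Max (g ` S)"
proof -
  have "Max (f ` S) \<in> f ` S" using assms by (intro Max_in) auto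
  then obtain y where y: "y \<in> S" "Max (f ` S) = f y" by auto
  have "g y \<le> Max (g ` S)" using assms y by auto
  then show ?thesis using assms(3)[OF y(1)] y by simp
qed

lemma enat_one_plus_inf: "1 + (x::enat) = \<infinity> \<longleftrightarrow> x = \<infinity>"
  by (cases x) (auto simp: one_enat_def)

context G_ctx
begin

abbreviation "d \<equiv> attr_dist VMax VMin T E \<rho>"

lemma fin_succ: "finite (E `` {s})"
  by (rule finite_subset[OF _ finG]) (use E_sub in blast)

lemma fin_rho: "s \<in> VMin \<Longrightarrow> finite (set_pmf (\<rho> s))"
  using rho fin_succ unfolding ml_strat_def by (meson finite_subset)

lemma rho_E: "s \<in> VMin \<Longrightarrow> u \<in> set_pmf (\<rho> s) \<Longrightarrow> (s, u) \<in> E"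
  using rho unfolding ml_strat_def by blast

lemma succ_ne: "s \<in> VMax \<union> VMin \<Longrightarrow> E `` {s} \<noteq> {}"
  using E_ex by blast

lemma d_fix: "d v = (if v \<in> T then 0
               else if v \<in> VMin then 1 + Min (d ` set_pmf (\<rho> v))
               else if v \<in> VMax then 1 + Max (d ` (E `` {v}))
               else 0)"
proof -
  let ?F = "(\<lambda>f v. if v \<in> T then 0
               else if v \<in> VMin then 1 + Min (f ` set_pmf (\<rho> v))
               else if v \<in> VMax then 1 + Max (f ` (E `` {v}))
               else (0::enat))"
  have "mono ?F"
  proof (rule monoI, rule le_funI)
    fix f g :: "'v \<Rightarrow> enat" and v assume fg: "f \<le> g"
    show "?F f v \<le> ?F g v"
    proof (cases "v \<in> T")
      case False
      show ?thesis
      proof (cases "v \<in> VMin")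
        case True
        have "Min (f ` set_pmf (\<rho> v)) \<le> Min (g ` set_pmf (\<rho> v))"
          using fin_rho[OF True] fg set_pmf_not_empty by (intro Min_mono_img) (auto simp: le_fun_def)
        then show ?thesis using False True by (simp add: add_left_mono)
      next
        case nm: False
        show ?thesis
        proof (cases "v \<in> VMax")
          case True
          have "Max (f ` (E `` {v})) \<le> Max (g ` (E `` {v}))"
            using fin_succ succ_ne[of v] True fg by (intro Max_mono_img) (auto simp: le_fun_def)
          then show ?thesis using False True nm by (simp add: add_left_mono)
        qed (use False nm in simp)
      qed
    qed simp
  qed
  then have "d = ?F d" unfolding attr_dist_def by (rule lfp_unfold)
  then show ?thesis by (metis (no_types, lifting))
qed

lemma d_T: "v \<in> T \<Longrightarrow> d v = 0" by (subst d_fix) simp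

end

locale G_reach = G_ctx +
  assumes reach: "\<forall>v \<in> VMax \<union> VMin \<union> T. \<forall>\<tau>. ml_strat E VMax \<tau> \<longrightarrow>
                  reach_prob VMax VMin T \<rho> \<tau> v = 1"
begin

lemma d_fin: assumes v0: "v0 \<in> G" shows "d v0 \<noteq> \<infinity>"
proof
  assume inf: "d v0 = \<infinity>"
  define D where "D = {v \<in> G. d v = \<infinity>}"
  have DT: "s \<in> D \<Longrightarrow> s \<notin> T" for s using d_T unfolding D_def by force
  have Dmin: "u \<in> D" if s: "s \<in> D" "s \<in> VMin" and u: "u \<in> set_pmf (\<rho> s)" for s u
  proof -
    have "d s = 1 + Min (d ` set_pmf (\<rho> s))" using DT[OF s(1)] s(2) by (subst d_fix) simp
    then have "Min (d ` set_pmf (\<rho> s)) = \<infinity>" using s(1) enat_one_plus_inf unfolding D_def by auto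
    moreover have "Min (d ` set_pmf (\<rho> s)) \<le> d u" using fin_rho[OF s(2)] u by simp
    ultimately have "d u = \<infinity>" by simp
    moreover have "u \<in> G" using rho_E[OF s(2) u] E_sub by blast
    ultimately show ?thesis unfolding D_def by simp
  qed
  have Dmax: "\<exists>u. (s, u) \<in> E \<and> u \<in> D" if s: "s \<in> D" "s \<in> VMax" for s
  proof -
    have "s \<notin> VMin" using s disj by blast
    then have "d s = 1 + Max (d ` (E `` {s}))" using DT[OF s(1)] s(2) by (subst d_fix) simp
    then have "Max (d ` (E `` {s})) = \<infinity>" using s(1) enat_one_plus_inf unfolding D_def by auto
    moreover have "Max (d ` (E `` {s})) \<in> d ` (E `` {s})"
      using fin_succ succ_ne[of s] s(2) by (intro Max_in) auto
    ultimately obtain u where "(s, u) \<in> E" "d u = \<infinity>" by auto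
    then show ?thesis using E_sub unfolding D_def by blast
  qed
  define \<tau> where "\<tau> s = return_pmf (if s \<in> D then (SOME u. (s, u) \<in> E \<and> u \<in> D) else (SOME u. (s, u) \<in> E))" for s
  have \<tau>E: "(s, (if s \<in> D then (SOME u. (s, u) \<in> E \<and> u \<in> D) else (SOME u. (s, u) \<in> E))) \<in> E"
    if "s \<in> VMax" for s
  proof (cases "s \<in> D")
    case True then show ?thesis using Dmax[OF True that] by (simp, metis (mono_tags, lifting) someI_ex)
  next
    case False then show ?thesis using E_ex[of s] that by (simp, metis someI_ex)
  qed
  have t: "\<tau> \<in> ML" unfolding ml_strat_def \<tau>_def using \<tau>E by auto
  have inv: "set h \<subseteq> D" if "h \<in> set_pmf (P \<tau> v0 n)" for n h
    using that
  proof (induction n arbitrary: h)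
    case 0 then show ?case using inf v0 unfolding D_def by simp
  next
    case (Suc n)
    then obtain h' u where h': "h' \<in> set_pmf (P \<tau> v0 n)" "h = h' @ [u]"
      and u: "u \<in> set_pmf (stp \<tau> (last h'))" by auto
    have "h' \<noteq> []" using paths_len[OF h'(1)] by auto
    have "set h' \<subseteq> D" using Suc.IH[OF h'(1)] .
    then have lD: "last h' \<in> D" using \<open>h' \<noteq> []\<close> by (meson last_in_set subsetD)
    have "u \<in> D"
    proof (cases "last h' \<in> VMin")
      case True then show ?thesis using Dmin[OF lD True] u by (simp add: stp_Min)
    next
      case False
      then have "last h' \<in> VMax" using lD DT[OF lD] unfolding D_def by auto
      then show ?thesis using u Dmax[OF lD] by (simp add: stp_Max \<tau>_def lD, metis (mono_tags, lifting) someI_ex)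
    qed
    then show ?case using \<open>set h' \<subseteq> D\<close> h' by auto
  qed
  have "measure_pmf.prob (P \<tau> v0 n) {h. \<exists>u \<in> set h. u \<in> T} = 0" for n
    unfolding measure_pmf_zero_iff using inv DT by blast
  then have "reach_prob VMax VMin T \<rho> \<tau> v0 = 0" unfolding reach_prob_def by simp
  moreover have "reach_prob VMax VMin T \<rho> \<tau> v0 = 1" using reach v0 t by blast
  ultimately show False by simp
qed

definition dn where "dn v = the_enat (attr_dist VMax VMin T E \<rho> v)"

lemma d_dn: "v \<in> G \<Longrightarrow> d v = enat (dn v)"
  unfolding dn_def using d_fin[of v] by (cases "d v") auto

lemma dn_T: "v \<in> T \<Longrightarrow> dn v = 0"
  unfolding dn_def using d_T by (simp add: zero_enat_def)

lemma dn_Min: assumes s: "s \<in> VMin"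
  shows "\<exists>u\<in>set_pmf (\<rho> s). dn s = Suc (dn u) \<and> (\<forall>u'\<in>set_pmf (\<rho> s). dn u \<le> dn u')"
proof -
  have sT: "s \<notin> T" using s disj by blast
  have ds: "d s = 1 + Min (d ` set_pmf (\<rho> s))" using sT s by (subst d_fix) simp
  obtain u where u: "u \<in> set_pmf (\<rho> s)" "Min (d ` set_pmf (\<rho> s)) = d u"
    using Min_in[of "d ` set_pmf (\<rho> s)"] fin_rho[OF s] set_pmf_not_empty by fastforce
  have uG: "u' \<in> G" if "u' \<in> set_pmf (\<rho> s)" for u' using rho_E[OF s that] E_sub by blast
  have "d u \<le> d u'" if "u' \<in> set_pmf (\<rho> s)" for u'
    using u that fin_rho[OF s] by (metis Min_le finite_imageI imageI)
  then have le: "\<forall>u'\<in>set_pmf (\<rho> s). dn u \<le> dn u'"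
    using d_dn[OF uG[OF u(1)]] d_dn[OF uG] by (metis enat_ord_simps(1))
  have "enat (dn s) = 1 + enat (dn u)" using ds u d_dn[OF uG[OF u(1)]] d_dn[of s] s by simp
  then have "dn s = Suc (dn u)" by (simp add: one_enat_def)
  then show ?thesis using u(1) le by blast
qed

lemma dn_Max: assumes s: "s \<in> VMax" and e: "(s, u) \<in> E" shows "dn u < dn s"
proof -
  have sT: "s \<notin> T" "s \<notin> VMin" using s disj by blast+
  have ds: "d s = 1 + Max (d ` (E `` {s}))" using sT s by (subst d_fix) simp
  have "d u \<le> Max (d ` (E `` {s}))" using e fin_succ by (simp add: Max_ge)
  then have "1 + d u \<le> d s" using ds by (simp add: add_left_mono)
  moreover have "u \<in> G" using e E_sub by blast
  ultimately show ?thesis using d_dn[of u] d_dn[of s] s by (simp add: one_enat_def)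
qed

end


context G_ctx
begin

lemma pmf_sum_G: "\<tau> \<in> ML \<Longrightarrow> s \<in> G \<Longrightarrow> (\<Sum>u\<in>G. pmf (stp \<tau> s) u) = 1"
  using finG stp_G by (intro sum_pmf_eq_1) auto

lemma Bop_mono: "(\<And>u. u \<in> G \<Longrightarrow> x u \<le> y u) \<Longrightarrow> Bop \<tau> x s \<le> Bop \<tau> y s"
  unfolding Bop_def by (auto intro!: sum_mono mult_left_mono)

lemma Pop_mono: "(\<And>u. u \<in> G \<Longrightarrow> x u \<le> y u) \<Longrightarrow> Pop \<tau> x s \<le> Pop \<tau> y s"
  unfolding Pop_def by (auto intro!: sum_mono mult_left_mono)

lemma Bop_affine: "Bop \<tau> x s = Bop \<tau> (\<lambda>_. 0) s + Pop \<tau> x s"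
  unfolding Bop_def Pop_def by (simp add: sum.distrib distrib_left)

lemma Pop_add: "Pop \<tau> (\<lambda>u. x u + y u) s = Pop \<tau> x s + Pop \<tau> y s"
  unfolding Pop_def by (simp add: sum.distrib distrib_left)

lemma Pop_scale: "Pop \<tau> (\<lambda>u. c * x u) s = c * Pop \<tau> x s"
  unfolding Pop_def by (simp add: sum_distrib_left mult_ac)

lemma Bop_iter_mono: "(\<And>u. u \<in> G \<Longrightarrow> x u \<le> y u) \<Longrightarrow> s \<in> G \<Longrightarrow> (Bop \<tau> ^^ n) x s \<le> (Bop \<tau> ^^ n) y s"
  by (induction n arbitrary: s) (auto intro!: Bop_mono)

lemma Pop_iter_mono: "(\<And>u. u \<in> G \<Longrightarrow> x u \<le> y u) \<Longrightarrow> s \<in> G \<Longrightarrow> (Pop \<tau> ^^ n) x s \<le> (Pop \<tau> ^^ n) y s"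
  by (induction n arbitrary: s) (auto intro!: Pop_mono)

lemma Pop_iter_add: "(Pop \<tau> ^^ n) (\<lambda>u. x u + y u) = (\<lambda>s. (Pop \<tau> ^^ n) x s + (Pop \<tau> ^^ n) y s)"
proof (induction n)
  case (Suc n) then show ?case by (simp add: Pop_add)
qed simp

lemma Pop_iter_scale: "(Pop \<tau> ^^ n) (\<lambda>u. c * x u) = (\<lambda>s. c * (Pop \<tau> ^^ n) x s)"
proof (induction n)
  case (Suc n) then show ?case by (simp add: Pop_scale)
qed simp

lemma Bop_iter_affine: "(Bop \<tau> ^^ n) x s = (Bop \<tau> ^^ n) (\<lambda>_. 0) s + (Pop \<tau> ^^ n) x s"
proof (induction n arbitrary: s)
  case (Suc n)
  have e: "(Bop \<tau> ^^ n) x = (\<lambda>s. (Bop \<tau> ^^ n) (\<lambda>_. 0) s + (Pop \<tau> ^^ n) x s)" using Suc by auto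
  have "(Bop \<tau> ^^ Suc n) x s = Bop \<tau> (\<lambda>_. 0) s + Pop \<tau> ((Bop \<tau> ^^ n) (\<lambda>_. 0)) s + Pop \<tau> ((Pop \<tau> ^^ n) x) s"
    by (simp add: e Bop_affine[of _ "\<lambda>s. _ s + _ s"] Pop_add)
  also have "\<dots> = (Bop \<tau> ^^ Suc n) (\<lambda>_. 0) s + (Pop \<tau> ^^ Suc n) x s"
    by (simp add: Bop_affine[of _ "(Bop \<tau> ^^ n) (\<lambda>_. 0)"])
  finally show ?case .
qed simp

end



context G_reach
begin

definition p0 :: real where
  "p0 = Min (insert (1/2) ((\<lambda>(s, u). pmf (\<rho> s) u) ` {(s, u). s \<in> VMin \<and> u \<in> set_pmf (\<rho> s)}))"

lemma p0_fin: "finite ((\<lambda>(s, u). pmf (\<rho> s) u) ` {(s, u). s \<in> VMin \<and> u \<in> set_pmf (\<rho> s)})"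
proof -
  have "{(s, u). s \<in> VMin \<and> u \<in> set_pmf (\<rho> s)} \<subseteq> G \<times> G" using rho_E E_sub by blast
  then show ?thesis using finG by (meson finite_SigmaI finite_imageI finite_subset)
qed

lemma p0_pos: "0 < p0"
  unfolding p0_def using p0_fin by (auto simp: set_pmf_iff)

lemma p0_half: "p0 \<le> 1/2"
  unfolding p0_def using p0_fin by (intro Min_le) auto

lemma p0_le: "s \<in> VMin \<Longrightarrow> u \<in> set_pmf (\<rho> s) \<Longrightarrow> p0 \<le> pmf (\<rho> s) u"
  unfolding p0_def using p0_fin by (intro Min_le) auto

definition L :: nat where "L = Max (insert 0 (dn ` G))"

lemma dn_le_L: "v \<in> G \<Longrightarrow> dn v \<le> L"
  unfolding L_def using finG by simp

definition Ac :: real where "Ac = 2 / p0 ^ L"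

definition ff :: "nat \<Rightarrow> real" where "ff k = Ac * (1 - p0 ^ k)"

lemma Ac_pos: "0 < Ac" unfolding Ac_def using p0_pos by simp

lemma ff_0: "ff 0 = 0" unfolding ff_def by simp

lemma ff_mono: "j \<le> k \<Longrightarrow> ff j \<le> ff k"
proof -
  assume "j \<le> k"
  then have "p0 ^ k \<le> p0 ^ j" using p0_pos p0_half by (intro power_decreasing) auto
  then show ?thesis unfolding ff_def using Ac_pos by (simp add: mult_left_mono)
qed

lemma ff_nonneg: "0 \<le> ff k" using ff_mono[of 0 k] ff_0 by simp

lemma AcpL: "Ac * p0 ^ L = 2" unfolding Ac_def using p0_pos by simp

lemma ff_step: assumes "k < L" shows "1 + ff k \<le> ff (Suc k)"
proof -
  have "p0 ^ L \<le> p0 ^ k" using assms p0_pos p0_half by (intro power_decreasing) auto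
  then have "Ac * p0 ^ L \<le> Ac * p0 ^ k" using Ac_pos by simp
  then have "2 \<le> Ac * p0 ^ k" using AcpL by simp
  moreover have "ff (Suc k) - ff k = Ac * p0 ^ k * (1 - p0)" unfolding ff_def by (simp add: algebra_simps)
  moreover have "1/2 \<le> 1 - p0" using p0_half by simp
  ultimately have "2 * (1/2) \<le> ff (Suc k) - ff k"
    by (metis mult_mono linorder_not_le not_less_iff_gr_or_eq zero_le_divide_1_iff zero_le_numeral order_trans)
  then show ?thesis by simp
qed

lemma ff_min: "1 + p0 * ff k + (1 - p0) * ff L \<le> ff (Suc k)"
proof -
  have "ff (Suc k) - (p0 * ff k + (1 - p0) * ff L) = (1 - p0) * (Ac * p0 ^ L)"
    unfolding ff_def by (simp add: algebra_simps)
  also have "\<dots> = 2 * (1 - p0)" using AcpL by simp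
  finally show ?thesis using p0_half by simp
qed

lemma pot_core:
  assumes t: "\<tau> \<in> ML" and s: "s \<in> G" "s \<notin> T"
  shows "1 + (\<Sum>u\<in>G. pmf (stp \<tau> s) u * ff (dn u)) \<le> ff (dn s)"
proof (cases "s \<in> VMin")
  case True
  obtain u0 where u0: "u0 \<in> set_pmf (\<rho> s)" "dn s = Suc (dn u0)" "\<forall>u'\<in>set_pmf (\<rho> s). dn u0 \<le> dn u'"
    using dn_Min[OF True] by blast
  have u0G: "u0 \<in> G" using rho_E[OF True u0(1)] E_sub by blast
  have sum1: "(\<Sum>u\<in>G. pmf (stp \<tau> s) u) = 1" using pmf_sum_G[OF t s(1)] .
  have "(\<Sum>u\<in>G. pmf (stp \<tau> s) u * ff (dn u)) = ff L - (\<Sum>u\<in>G. pmf (stp \<tau> s) u * (ff L - ff (dn u)))"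
    using sum1 by (simp add: algebra_simps sum_subtractf sum_distrib_right[symmetric])
  also have "\<dots> \<le> ff L - pmf (stp \<tau> s) u0 * (ff L - ff (dn u0))"
  proof -
    have "pmf (stp \<tau> s) u0 * (ff L - ff (dn u0)) \<le> (\<Sum>u\<in>G. pmf (stp \<tau> s) u * (ff L - ff (dn u)))"
      using u0G finG dn_le_L ff_mono by (intro member_le_sum) (auto intro!: mult_nonneg_nonneg)
    then show ?thesis by simp
  qed
  also have "\<dots> \<le> ff L - p0 * (ff L - ff (dn u0))"
  proof -
    have "p0 \<le> pmf (stp \<tau> s) u0" using p0_le[OF True u0(1)] stp_Min[OF True] by simp
    moreover have "0 \<le> ff L - ff (dn u0)" using ff_mono dn_le_L[OF u0G] by simp
    ultimately show ?thesis by (simp add: mult_right_mono)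
  qed
  also have "\<dots> = p0 * ff (dn u0) + (1 - p0) * ff L" by (simp add: algebra_simps)
  finally show ?thesis using ff_min[of "dn u0"] u0(2) by simp
next
  case False
  then have sM: "s \<in> VMax" using s by auto
  obtain k where k: "dn s = Suc k"
  proof (cases "dn s")
    case 0
    obtain u where "(s, u) \<in> E" using E_ex sM by blast
    then show ?thesis using dn_Max[OF sM] 0 by fastforce
  qed
  have kL: "k < L" using dn_le_L[OF s(1)] k by simp
  have "(\<Sum>u\<in>G. pmf (stp \<tau> s) u * ff (dn u)) \<le> (\<Sum>u\<in>G. pmf (stp \<tau> s) u * ff k)"
  proof (rule sum_mono)
    fix u assume "u \<in> G"
    show "pmf (stp \<tau> s) u * ff (dn u) \<le> pmf (stp \<tau> s) u * ff k"
    proof (cases "u \<in> set_pmf (stp \<tau> s)")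
      case True
      then have "(s, u) \<in> E" using stp_supp[OF t] sM by blast
      then have "dn u \<le> k" using dn_Max[OF sM] k by fastforce
      then show ?thesis by (simp add: ff_mono mult_left_mono)
    next
      case False then show ?thesis by (simp add: set_pmf_eq)
    qed
  qed
  also have "\<dots> = ff k" using pmf_sum_G[OF t s(1)] by (simp add: sum_distrib_right[symmetric])
  finally show ?thesis using ff_step[OF kL] k by simp
qed

end


context G_reach
begin

definition Wb :: real where "Wb = Max (insert 0 ((\<lambda>(s, u). \<bar>real_of_int (w s u)\<bar>) ` (G \<times> G)))"

lemma Wb_nonneg: "0 \<le> Wb" unfolding Wb_def using finG by simp

lemma Wb_ge: "s \<in> G \<Longrightarrow> u \<in> G \<Longrightarrow> \<bar>real_of_int (w s u)\<bar> \<le> Wb"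
  unfolding Wb_def using finG by (intro Max_ge) auto

lemma Wb_ge2: "s \<in> G \<Longrightarrow> u \<in> G \<Longrightarrow> - Wb \<le> real_of_int (w s u) \<and> real_of_int (w s u) \<le> Wb"
  using Wb_ge[of s u] by linarith

definition H where "H s = Wb * ff (dn s)"
definition q0 where "q0 s = (if s \<in> T then 0 else (1::real))"
definition gg where "gg s = ff (dn s)"

lemma H_T: "t \<in> T \<Longrightarrow> H t = 0" unfolding H_def by (simp add: dn_T ff_0)
lemma H_nonneg: "0 \<le> H s" unfolding H_def using Wb_nonneg ff_nonneg by simp

lemma sum_pmf_split:
  assumes t: "\<tau> \<in> ML" and s: "s \<in> G"
  shows "(\<Sum>u\<in>G. pmf (stp \<tau> s) u * (Wb + H u)) = Wb * (1 + (\<Sum>u\<in>G. pmf (stp \<tau> s) u * ff (dn u)))"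
proof -
  have "(\<Sum>u\<in>G. pmf (stp \<tau> s) u * (Wb + H u)) = Wb * (\<Sum>u\<in>G. pmf (stp \<tau> s) u) + Wb * (\<Sum>u\<in>G. pmf (stp \<tau> s) u * ff (dn u))"
    by (simp add: H_def algebra_simps sum.distrib sum_distrib_left)
  then show ?thesis using pmf_sum_G[OF t s] by (simp add: algebra_simps)
qed

lemma H_sup: assumes t: "\<tau> \<in> ML" and s: "s \<in> G" shows "Bop \<tau> H s \<le> H s"
proof (cases "s \<in> T")
  case True then show ?thesis by (simp add: Bop_def H_T)
next
  case False
  have "Bop \<tau> H s = (\<Sum>u\<in>G. pmf (stp \<tau> s) u * (real_of_int (w s u) + H u))" using False by (simp add: Bop_def)
  also have "\<dots> \<le> (\<Sum>u\<in>G. pmf (stp \<tau> s) u * (Wb + H u))"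
  proof (intro sum_mono mult_left_mono)
    fix u assume "u \<in> G" then show "real_of_int (w s u) + H u \<le> Wb + H u" using Wb_ge2[OF s] by simp
  qed auto
  also have "\<dots> = Wb * (1 + (\<Sum>u\<in>G. pmf (stp \<tau> s) u * ff (dn u)))" by (rule sum_pmf_split[OF t s])
  also have "\<dots> \<le> H s" unfolding H_def using pot_core[OF t s False] Wb_nonneg by (simp add: mult_left_mono)
  finally show ?thesis .
qed

lemma H_sub: assumes t: "\<tau> \<in> ML" and s: "s \<in> G" shows "- H s \<le> Bop \<tau> (\<lambda>u. - H u) s"
proof (cases "s \<in> T")
  case True then show ?thesis by (simp add: Bop_def H_T)
next
  case False
  have "- H s \<le> - (Wb * (1 + (\<Sum>u\<in>G. pmf (stp \<tau> s) u * ff (dn u))))"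
    unfolding H_def using pot_core[OF t s False] Wb_nonneg by (simp add: mult_left_mono)
  also have "\<dots> = - (\<Sum>u\<in>G. pmf (stp \<tau> s) u * (Wb + H u))" using sum_pmf_split[OF t s] by simp
  also have "\<dots> = (\<Sum>u\<in>G. pmf (stp \<tau> s) u * (- Wb + - H u))" by (simp add: sum_negf[symmetric] algebra_simps)
  also have "\<dots> \<le> (\<Sum>u\<in>G. pmf (stp \<tau> s) u * (real_of_int (w s u) + - H u))"
  proof (intro sum_mono mult_left_mono)
    fix u assume "u \<in> G" then show "- Wb + - H u \<le> real_of_int (w s u) + - H u" using Wb_ge2[OF s] by simp
  qed auto
  also have "\<dots> = Bop \<tau> (\<lambda>u. - H u) s" using False by (simp add: Bop_def)
  finally show ?thesis .
qed

lemma g_pot: assumes t: "\<tau> \<in> ML" and s: "s \<in> G" shows "q0 s + Pop \<tau> gg s \<le> gg s"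
proof (cases "s \<in> T")
  case True then show ?thesis by (simp add: Pop_def q0_def gg_def dn_T ff_0)
next
  case False then show ?thesis using pot_core[OF t s False] by (simp add: Pop_def q0_def gg_def)
qed

lemma Pop_iter_zero: "(Pop \<tau> ^^ n) (\<lambda>_. 0) = (\<lambda>_. 0)"
  using Pop_iter_scale[where \<tau>=\<tau> and n=n and c=0 and x="\<lambda>_. 0"] by simp

lemma Pop_iter_nonneg: "(\<And>u. u \<in> G \<Longrightarrow> 0 \<le> x u) \<Longrightarrow> s \<in> G \<Longrightarrow> 0 \<le> (Pop \<tau> ^^ n) x s"
  using Pop_iter_mono[where x="\<lambda>_. 0" and y=x and s=s and \<tau>=\<tau> and n=n] Pop_iter_zero by simp

lemma gsum: assumes t: "\<tau> \<in> ML"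
  shows "s \<in> G \<Longrightarrow> (\<Sum>j<n. (Pop \<tau> ^^ j) q0 s) + (Pop \<tau> ^^ n) gg s \<le> gg s"
proof (induction n arbitrary: s)
  case 0 then show ?case by simp
next
  case (Suc n)
  have "(Pop \<tau> ^^ n) (\<lambda>u. q0 u + Pop \<tau> gg u) s \<le> (Pop \<tau> ^^ n) gg s"
    using g_pot[OF t] Suc.prems by (intro Pop_iter_mono) auto
  then have "(Pop \<tau> ^^ n) q0 s + (Pop \<tau> ^^ Suc n) gg s \<le> (Pop \<tau> ^^ n) gg s"
    by (simp add: Pop_iter_add funpow_Suc_right del: funpow.simps)
  then show ?case using Suc.IH[OF Suc.prems] by simp
qed

lemma q_lim: assumes t: "\<tau> \<in> ML" and s: "s \<in> G" shows "(\<lambda>n. (Pop \<tau> ^^ n) q0 s) \<longlonglongrightarrow> 0"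
proof -
  have nn: "0 \<le> (Pop \<tau> ^^ n) q0 s" for n using s by (intro Pop_iter_nonneg) (auto simp: q0_def)
  have "(\<Sum>j<n. (Pop \<tau> ^^ j) q0 s) \<le> gg s" for n
  proof -
    have "0 \<le> (Pop \<tau> ^^ n) gg s" using s by (intro Pop_iter_nonneg) (auto simp: gg_def ff_nonneg)
    then show ?thesis using gsum[OF t s, of n] by simp
  qed
  then have "summable (\<lambda>n. (Pop \<tau> ^^ n) q0 s)" using nn by (intro summableI_nonneg_bounded) auto
  then show ?thesis by (rule summable_LIMSEQ_zero)
qed

lemma Pop_lim: assumes t: "\<tau> \<in> ML" and xT: "\<And>t. t \<in> T \<Longrightarrow> x t = 0" and s: "s \<in> G"
  shows "(\<lambda>n. (Pop \<tau> ^^ n) x s) \<longlonglongrightarrow> 0"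
proof -
  define M where "M = Max (insert 0 ((\<lambda>u. \<bar>x u\<bar>) ` G))"
  have M: "u \<in> G \<Longrightarrow> \<bar>x u\<bar> \<le> M" for u unfolding M_def using finG by (intro Max_ge) auto
  have up: "x u \<le> M * q0 u" if "u \<in> G" for u
  proof (cases "u \<in> T")
    case True then show ?thesis using xT[OF True] by (simp add: q0_def)
  next
    case False then show ?thesis using M[OF that] by (simp add: q0_def abs_le_iff)
  qed
  have lo: "(-M) * q0 u \<le> x u" if "u \<in> G" for u
  proof (cases "u \<in> T")
    case True then show ?thesis using xT[OF True] by (simp add: q0_def)
  next
    case False then show ?thesis using M[OF that] by (simp add: q0_def abs_le_iff)
  qed
  have l2: "(\<lambda>n. M * (Pop \<tau> ^^ n) q0 s) \<longlonglongrightarrow> M * 0" by (rule tendsto_mult_left[OF q_lim[OF t s]])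
  have l1: "(\<lambda>n. (-M) * (Pop \<tau> ^^ n) q0 s) \<longlonglongrightarrow> (-M) * 0" by (rule tendsto_mult_left[OF q_lim[OF t s]])
  have b2: "(Pop \<tau> ^^ n) x s \<le> M * (Pop \<tau> ^^ n) q0 s" for n
    using Pop_iter_mono[where x=x and y="\<lambda>u. M * q0 u" and \<tau>=\<tau> and n=n, OF up s] by (simp only: Pop_iter_scale)
  have b1: "(-M) * (Pop \<tau> ^^ n) q0 s \<le> (Pop \<tau> ^^ n) x s" for n
    using Pop_iter_mono[where y=x and x="\<lambda>u. (-M) * q0 u" and \<tau>=\<tau> and n=n, OF lo s] by (simp only: Pop_iter_scale)
  have "(\<lambda>n. (Pop \<tau> ^^ n) x s) \<longlonglongrightarrow> (-M) * 0"
  proof (rule tendsto_sandwich[OF _ _ l1])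
    show "\<forall>\<^sub>F n in sequentially. (-M) * (Pop \<tau> ^^ n) q0 s \<le> (Pop \<tau> ^^ n) x s"
      using b1 by (intro always_eventually) blast
    show "\<forall>\<^sub>F n in sequentially. (Pop \<tau> ^^ n) x s \<le> M * (Pop \<tau> ^^ n) q0 s"
      using b2 by (intro always_eventually) blast
    show "(\<lambda>n. M * (Pop \<tau> ^^ n) q0 s) \<longlonglongrightarrow> (-M) * 0" using l2 by simp
  qed
  then show ?thesis by simp
qed
end

context G_reach begin

lemma H_dec: assumes t: "\<tau> \<in> ML" shows "s \<in> G \<Longrightarrow> (Bop \<tau> ^^ Suc n) H s \<le> (Bop \<tau> ^^ n) H s"
proof (induction n arbitrary: s)
  case 0 then show ?case using H_sup[OF t] by simp
next
  case (Suc n)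
  have "Bop \<tau> ((Bop \<tau> ^^ Suc n) H) s \<le> Bop \<tau> ((Bop \<tau> ^^ n) H) s"
    using Suc.IH by (intro Bop_mono) auto
  then show ?case by simp
qed

lemma H_iter_le: assumes t: "\<tau> \<in> ML" shows "s \<in> G \<Longrightarrow> (Bop \<tau> ^^ n) H s \<le> H s"
proof (induction n arbitrary: s)
  case (Suc n) show ?case by (rule order_trans[OF H_dec[OF t Suc.prems] Suc.IH[OF Suc.prems]])
qed simp

lemma H_low: assumes t: "\<tau> \<in> ML" shows "s \<in> G \<Longrightarrow> - H s \<le> (Bop \<tau> ^^ n) (\<lambda>u. - H u) s"
proof (induction n arbitrary: s)
  case (Suc n)
  have "Bop \<tau> (\<lambda>u. - H u) s \<le> Bop \<tau> ((Bop \<tau> ^^ n) (\<lambda>u. - H u)) s"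
    using Suc.IH by (intro Bop_mono) auto
  then show ?case using H_sub[OF t Suc.prems] by simp
qed simp

lemma B_bounds: assumes t: "\<tau> \<in> ML" and s: "s \<in> G"
  shows "- H s \<le> (Bop \<tau> ^^ n) (\<lambda>_. 0) s" "(Bop \<tau> ^^ n) (\<lambda>_. 0) s \<le> H s"
proof -
  have "(Bop \<tau> ^^ n) (\<lambda>u. - H u) s \<le> (Bop \<tau> ^^ n) (\<lambda>_. 0) s"
    using H_nonneg s by (intro Bop_iter_mono) auto
  then show "- H s \<le> (Bop \<tau> ^^ n) (\<lambda>_. 0) s" using H_low[OF t s, of n] by simp
  have "(Bop \<tau> ^^ n) (\<lambda>_. 0) s \<le> (Bop \<tau> ^^ n) H s"
    using H_nonneg s by (intro Bop_iter_mono) auto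
  then show "(Bop \<tau> ^^ n) (\<lambda>_. 0) s \<le> H s" using H_iter_le[OF t s, of n] by simp
qed

definition Ev where "Ev \<tau> s = lim (\<lambda>n. (Bop \<tau> ^^ n) (\<lambda>_. 0) s)"

lemma B_conv: assumes t: "\<tau> \<in> ML" and s: "s \<in> G"
  shows "(\<lambda>n. (Bop \<tau> ^^ n) (\<lambda>_. 0) s) \<longlonglongrightarrow> Ev \<tau> s"
proof -
  have dec: "decseq (\<lambda>n. (Bop \<tau> ^^ n) H s)"
    using H_dec[OF t s] by (simp add: decseq_Suc_iff)
  have lb: "\<forall>i. - H s \<le> (Bop \<tau> ^^ i) H s"
  proof
    fix i
    have "(Bop \<tau> ^^ i) (\<lambda>u. - H u) s \<le> (Bop \<tau> ^^ i) H s"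
      using H_nonneg s by (intro Bop_iter_mono) (auto intro: order_trans[of _ 0])
    then show "- H s \<le> (Bop \<tau> ^^ i) H s" using H_low[OF t s, of i] by simp
  qed
  obtain Lh where Lh: "(\<lambda>n. (Bop \<tau> ^^ n) H s) \<longlonglongrightarrow> Lh" using decseq_convergent[OF dec lb] by blast
  have P0: "(\<lambda>n. (Pop \<tau> ^^ n) H s) \<longlonglongrightarrow> 0" using Pop_lim[OF t _ s] H_T by blast
  have eq: "(Bop \<tau> ^^ n) (\<lambda>_. 0) s = (Bop \<tau> ^^ n) H s - (Pop \<tau> ^^ n) H s" for n
    using Bop_iter_affine[where \<tau>=\<tau> and n=n and x=H and s=s] by simp
  have "(\<lambda>n. (Bop \<tau> ^^ n) (\<lambda>_. 0) s) \<longlonglongrightarrow> Lh - 0"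
    unfolding eq by (intro tendsto_diff Lh P0)
  then have "convergent (\<lambda>n. (Bop \<tau> ^^ n) (\<lambda>_. 0) s)" unfolding convergent_def by blast
  then show ?thesis unfolding Ev_def by (simp add: convergent_LIMSEQ_iff)
qed

lemma Ev_bounds: assumes t: "\<tau> \<in> ML" and s: "s \<in> G"
  shows "- H s \<le> Ev \<tau> s" "Ev \<tau> s \<le> H s"
  using B_conv[OF t s] B_bounds[OF t s]
  by (auto intro: LIMSEQ_le_const LIMSEQ_le_const2)

lemma Ev_fix: assumes t: "\<tau> \<in> ML" and s: "s \<in> G"
  shows "Ev \<tau> s = Bop \<tau> (Ev \<tau>) s"
proof -
  have a: "(\<lambda>n. (Bop \<tau> ^^ Suc n) (\<lambda>_. 0) s) \<longlonglongrightarrow> Ev \<tau> s" using LIMSEQ_Suc[OF B_conv[OF t s]] .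
  have b: "(\<lambda>n. (Bop \<tau> ^^ Suc n) (\<lambda>_. 0) s) \<longlonglongrightarrow> Bop \<tau> (Ev \<tau>) s"
  proof (cases "s \<in> T")
    case True then show ?thesis by (simp add: Bop_def)
  next
    case False
    have "(\<lambda>n. \<Sum>u\<in>G. pmf (stp \<tau> s) u * (real_of_int (w s u) + (Bop \<tau> ^^ n) (\<lambda>_. 0) u))
        \<longlonglongrightarrow> (\<Sum>u\<in>G. pmf (stp \<tau> s) u * (real_of_int (w s u) + Ev \<tau> u))"
      by (intro tendsto_sum tendsto_mult tendsto_add tendsto_const B_conv[OF t]) 
    then show ?thesis using False by (simp add: Bop_def)
  qed
  show ?thesis using LIMSEQ_unique[OF a b] .
qed

lemma Ev_T: assumes t: "\<tau> \<in> ML" and s: "s \<in> T" shows "Ev \<tau> s = 0"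
  using Ev_fix[OF t] s by (simp add: Bop_def)

lemma ETP_Ev: assumes t: "\<tau> \<in> ML" and v: "v \<in> G"
  shows "ETP VMax VMin T w \<rho> \<tau> v = ereal (Ev \<tau> v)"
proof -
  have "reach_prob VMax VMin T \<rho> \<tau> v = 1" using reach t v by blast
  then show ?thesis unfolding ETP_def Ev_def using expect_paths[OF t v] by simp
qed

lemma improve: assumes t: "\<tau> \<in> ML" and xT: "\<And>t. t \<in> T \<Longrightarrow> x t = 0"
  and inc: "\<And>s. s \<in> G \<Longrightarrow> x s \<le> Bop \<tau> x s" and s: "s \<in> G"
  shows "Bop \<tau> x s \<le> Ev \<tau> s"
proof -
  have mono: "(Bop \<tau> ^^ n) x s' \<le> (Bop \<tau> ^^ Suc n) x s'" if "s' \<in> G" for n s'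
    using that
  proof (induction n arbitrary: s')
    case 0 then show ?case using inc by simp
  next
    case (Suc n)
    have "Bop \<tau> ((Bop \<tau> ^^ n) x) s' \<le> Bop \<tau> ((Bop \<tau> ^^ Suc n) x) s'"
      using Suc.IH by (intro Bop_mono) auto
    then show ?case by simp
  qed
  have chain: "Bop \<tau> x s \<le> (Bop \<tau> ^^ Suc n) x s" for n
  proof (induction n)
    case 0 then show ?case by simp
  next
    case (Suc n) then show ?case using mono[OF s, of "Suc n"] by simp
  qed
  have "(\<lambda>n. (Bop \<tau> ^^ Suc n) x s) \<longlonglongrightarrow> Ev \<tau> s + 0"
  proof -
    have eq: "(Bop \<tau> ^^ Suc n) x s = (Bop \<tau> ^^ Suc n) (\<lambda>_. 0) s + (Pop \<tau> ^^ Suc n) x s" for n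
      by (rule Bop_iter_affine)
    show ?thesis unfolding eq
      by (intro tendsto_add LIMSEQ_Suc[OF B_conv[OF t s]] LIMSEQ_Suc[OF Pop_lim[OF t xT s]])
  qed
  then show ?thesis using chain by (intro LIMSEQ_le_const[where X="\<lambda>n. (Bop \<tau> ^^ Suc n) x s"]) auto
qed

end

context G_reach begin

abbreviation "Vm \<equiv> val_m_rho VMax VMin T E w \<rho>"
definition Vr where "Vr v = real_of_ereal (val_m_rho VMax VMin T E w \<rho> v)"

lemma mlset_ne: "\<exists>\<tau>. \<tau> \<in> ML"
proof -
  define \<tau> where "\<tau> s = return_pmf (SOME u. (s, u) \<in> E)" for s
  have "\<tau> \<in> ML" unfolding ml_strat_def \<tau>_def using E_ex by (auto intro: someI_ex)
  then show ?thesis by blast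
qed

lemma Vm_SUP: "v \<in> G \<Longrightarrow> Vm v = (SUP \<tau>\<in>ML. ereal (Ev \<tau> v))"
  unfolding val_m_rho_def using ETP_Ev by (intro SUP_cong) auto

lemma V_eq: assumes v: "v \<in> G" shows "Vm v = ereal (Vr v)"
proof -
  obtain \<tau>0 where t0: "\<tau>0 \<in> ML" using mlset_ne by blast
  have lo: "ereal (Ev \<tau>0 v) \<le> Vm v" unfolding Vm_SUP[OF v] using t0 by (intro SUP_upper) auto
  have up: "Vm v \<le> ereal (H v)" unfolding Vm_SUP[OF v] using Ev_bounds[OF _ v] by (intro SUP_least) auto
  have "\<bar>Vm v\<bar> \<noteq> \<infinity>" using lo up by auto
  then show ?thesis unfolding Vr_def by (simp add: ereal_real)
qed

lemma V_ge: "\<tau> \<in> ML \<Longrightarrow> v \<in> G \<Longrightarrow> Ev \<tau> v \<le> Vr v"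
proof -
  assume t: "\<tau> \<in> ML" and v: "v \<in> G"
  have "ereal (Ev \<tau> v) \<le> Vm v" unfolding Vm_SUP[OF v] using t by (intro SUP_upper) auto
  then show ?thesis using V_eq[OF v] by simp
qed

lemma V_approx: assumes v: "v \<in> G" and e: "0 < e" shows "\<exists>\<tau>\<in>ML. Vr v - e < Ev \<tau> v"
proof (rule ccontr)
  assume "\<not> ?thesis"
  then have "\<forall>\<tau>\<in>ML. ereal (Ev \<tau> v) \<le> ereal (Vr v - e)" by auto
  then have "Vm v \<le> ereal (Vr v - e)" unfolding Vm_SUP[OF v] by (intro SUP_least) auto
  then show False using V_eq[OF v] e by simp
qed

lemma Bop_cong: "stp \<tau> s = stp \<tau>' s \<Longrightarrow> Bop \<tau> x s = Bop \<tau>' x s"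
  unfolding Bop_def by simp

lemma Max_ineq: assumes v: "v \<in> VMax" and e: "(v, v') \<in> E"
  shows "real_of_int (w v v') + Vr v' \<le> Vr v"
proof -
  have vG: "v \<in> G" and v'G: "v' \<in> G" using v e E_sub by auto
  have key: "real_of_int (w v v') + Ev \<tau> v' \<le> Vr v" if t: "\<tau> \<in> ML" for \<tau>
  proof (cases "real_of_int (w v v') + Ev \<tau> v' \<le> Ev \<tau> v")
    case True then show ?thesis using V_ge[OF t vG] by simp
  next
    case False
    define \<tau>' where "\<tau>' = \<tau>(v := return_pmf v')"
    have t': "\<tau>' \<in> ML" using t e unfolding \<tau>'_def ml_strat_def by auto
    have stp_o: "stp \<tau>' s = stp \<tau> s" if "s \<noteq> v" for s using that unfolding \<tau>'_def mc_step_def by simp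
    have stp_v: "stp \<tau>' v = return_pmf v'" using stp_Max[OF v] unfolding \<tau>'_def by simp
    have Bv: "Bop \<tau>' (Ev \<tau>) v = real_of_int (w v v') + Ev \<tau> v'"
    proof -
      have vT: "v \<notin> T" using v disj by blast
      have "Bop \<tau>' (Ev \<tau>) v = (\<Sum>u\<in>G. of_bool (v' = u) * (real_of_int (w v u) + Ev \<tau> u))"
        using vT by (simp add: Bop_def stp_v indicator_def)
      also have "\<dots> = (\<Sum>u\<in>G. (if v' = u then real_of_int (w v u) + Ev \<tau> u else 0))"
        by (intro sum.cong) auto
      also have "\<dots> = real_of_int (w v v') + Ev \<tau> v'"
        using finG v'G by (simp add: sum.delta)
      finally show ?thesis .
    qed
    have inc: "Ev \<tau> s \<le> Bop \<tau>' (Ev \<tau>) s" if "s \<in> G" for s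
    proof (cases "s = v")
      case True then show ?thesis using Bv False by simp
    next
      case False
      then show ?thesis using Ev_fix[OF t that] Bop_cong[OF stp_o[OF False]] by simp
    qed
    have "Bop \<tau>' (Ev \<tau>) v \<le> Ev \<tau>' v" using improve[OF t' Ev_T[OF t] inc vG] .
    then show ?thesis using Bv V_ge[OF t' vG] by simp
  qed
  show ?thesis
  proof (rule ccontr)
    assume nt: "\<not> ?thesis"
    define e where "e = (real_of_int (w v v') + Vr v' - Vr v) / 2"
    have "0 < e" using nt unfolding e_def by simp
    then obtain \<tau> where t: "\<tau> \<in> ML" "Vr v' - e < Ev \<tau> v'" using V_approx[OF v'G] by blast
    then show False using key[OF t(1)] nt unfolding e_def by (simp add: field_simps)
  qed
qed

lemma combine: assumes e: "0 < e" shows "finite U \<Longrightarrow> U \<subseteq> G \<Longrightarrow> \<exists>\<tau>\<in>ML. \<forall>u\<in>U. Vr u - e < Ev \<tau> u"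
proof (induction U rule: finite_induct)
  case empty then show ?case using mlset_ne by auto
next
  case (insert a U)
  obtain \<tau>1 where t1: "\<tau>1 \<in> ML" "\<forall>u\<in>U. Vr u - e < Ev \<tau>1 u" using insert by auto
  obtain \<tau>2 where t2: "\<tau>2 \<in> ML" "Vr a - e < Ev \<tau>2 a" using V_approx[OF _ e, of a] insert.prems by auto
  define \<tau>3 where "\<tau>3 s = (if Ev \<tau>2 s \<le> Ev \<tau>1 s then \<tau>1 s else \<tau>2 s)" for s
  have t3: "\<tau>3 \<in> ML" using t1(1) t2(1) unfolding ml_strat_def \<tau>3_def by auto
  define x where "x s = max (Ev \<tau>1 s) (Ev \<tau>2 s)" for s
  have xT: "x t = 0" if "t \<in> T" for t using Ev_T[OF t1(1) that] Ev_T[OF t2(1) that] unfolding x_def by simp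
  have inc: "x s \<le> Bop \<tau>3 x s" if s: "s \<in> G" for s
  proof (cases "s \<in> T")
    case True then show ?thesis using xT[OF True] by (simp add: Bop_def)
  next
    case nT: False
    show ?thesis
    proof (cases "s \<in> VMin")
      case True
      have "Ev \<tau>1 s \<le> Bop \<tau>3 x s"
        using Ev_fix[OF t1(1) s] Bop_cong[of \<tau>1 s \<tau>3 x] stp_Min[OF True] Bop_mono[of "Ev \<tau>1" x \<tau>1 s]
        by (simp add: x_def)
      moreover have "Ev \<tau>2 s \<le> Bop \<tau>3 x s"
        using Ev_fix[OF t2(1) s] Bop_cong[of \<tau>2 s \<tau>3 x] stp_Min[OF True] Bop_mono[of "Ev \<tau>2" x \<tau>2 s]
        by (simp add: x_def)
      ultimately show ?thesis by (simp add: x_def)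
    next
      case False
      then have sM: "s \<in> VMax" using s nT by auto
      show ?thesis
      proof (cases "Ev \<tau>2 s \<le> Ev \<tau>1 s")
        case True
        have "stp \<tau>3 s = stp \<tau>1 s" using stp_Max[OF sM] True unfolding \<tau>3_def by simp
        then show ?thesis
          using Ev_fix[OF t1(1) s] Bop_cong[of \<tau>1 s \<tau>3 x] Bop_mono[of "Ev \<tau>1" x \<tau>1 s] True
          by (simp add: x_def)
      next
        case False
        have "stp \<tau>3 s = stp \<tau>2 s" using stp_Max[OF sM] False unfolding \<tau>3_def by simp
        then show ?thesis
          using Ev_fix[OF t2(1) s] Bop_cong[of \<tau>2 s \<tau>3 x] Bop_mono[of "Ev \<tau>2" x \<tau>2 s] False
          by (simp add: x_def)
      qed
    qed
  qed
  have "x s \<le> Ev \<tau>3 s" if "s \<in> G" for s using inc[OF that] improve[OF t3 xT inc that] by simp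
  then show ?case using t1 t2 t3 insert.prems unfolding x_def
    by (intro bexI[OF _ t3]) (auto intro: less_le_trans)
qed

end

context G_reach begin

lemma rho_G: "v \<in> VMin \<Longrightarrow> set_pmf (\<rho> v) \<subseteq> G" using rho_E E_sub by blast

lemma rho_sum1: "v \<in> VMin \<Longrightarrow> (\<Sum>u\<in>G. pmf (\<rho> v) u) = 1"
  using rho_G finG by (intro sum_pmf_eq_1) auto

lemma Min_ineq: assumes v: "v \<in> VMin"
  shows "(\<Sum>u\<in>G. pmf (\<rho> v) u * (real_of_int (w v u) + Vr u)) \<le> Vr v"
proof (rule ccontr)
  assume nt: "\<not> ?thesis"
  define S where "S = (\<Sum>u\<in>G. pmf (\<rho> v) u * (real_of_int (w v u) + Vr u))"
  define e where "e = (S - Vr v) / 2"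
  have e: "0 < e" using nt unfolding e_def S_def by simp
  obtain \<tau> where t: "\<tau> \<in> ML" "\<forall>u\<in>G. Vr u - e < Ev \<tau> u" using combine[OF e finG] by blast
  have vG: "v \<in> G" using v by auto
  have "(\<Sum>u\<in>G. pmf (\<rho> v) u * (real_of_int (w v u) + (Vr u - e))) = S - e * (\<Sum>u\<in>G. pmf (\<rho> v) u)"
    unfolding S_def by (simp add: algebra_simps sum_subtractf sum_distrib_left)
  then have "S - e = (\<Sum>u\<in>G. pmf (\<rho> v) u * (real_of_int (w v u) + (Vr u - e)))"
    using rho_sum1[OF v] by simp
  also have "\<dots> \<le> (\<Sum>u\<in>G. pmf (\<rho> v) u * (real_of_int (w v u) + Ev \<tau> u))"
  proof (intro sum_mono mult_left_mono)
    fix u assume "u \<in> G"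
    then have "Vr u - e < Ev \<tau> u" using t(2) by blast
    then show "real_of_int (w v u) + (Vr u - e) \<le> real_of_int (w v u) + Ev \<tau> u" by simp
  qed auto
  also have "\<dots> = Bop \<tau> (Ev \<tau>) v"
  proof -
    have vT: "v \<notin> T" using v disj by blast
    then show ?thesis by (simp add: Bop_def stp_Min[OF v])
  qed
  also have "\<dots> = Ev \<tau> v" using Ev_fix[OF t(1) vG] by simp
  also have "\<dots> \<le> Vr v" using V_ge[OF t(1) vG] .
  finally show False unfolding e_def using nt S_def by (simp add: field_simps)
qed

lemma Etil_iff: assumes v: "v \<in> VMin"
  shows "u \<in> Etil VMax VMin T E w \<rho> v \<longleftrightarrow> u \<in> set_pmf (\<rho> v) \<and>
           (\<forall>u''\<in>set_pmf (\<rho> v). real_of_int (w v u) + Vr u \<le> real_of_int (w v u'') + Vr u'')"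
proof -
  have "u \<in> set_pmf (\<rho> v) \<Longrightarrow> u'' \<in> set_pmf (\<rho> v) \<Longrightarrow>
    (ereal (real_of_int (w v u)) + Vm u \<le> ereal (real_of_int (w v u'')) + Vm u'') \<longleftrightarrow>
    (real_of_int (w v u) + Vr u \<le> real_of_int (w v u'') + Vr u'')" for u''
  proof -
    assume "u \<in> set_pmf (\<rho> v)" "u'' \<in> set_pmf (\<rho> v)"
    then have "u \<in> G" "u'' \<in> G" using rho_G[OF v] by auto
    then show ?thesis by (simp add: V_eq)
  qed
  then show ?thesis unfolding Etil_def by auto
qed

lemma main:
  assumes sigma1: "\<forall>v \<in> VMin. \<sigma>1 v \<in> Etil VMax VMin T E w \<rho> v \<and>
                  (\<forall>u \<in> Etil VMax VMin T E w \<rho> v.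
                     attr_dist VMax VMin T E \<rho> (\<sigma>1 v) \<le> attr_dist VMax VMin T E \<rho> u)"
    and c: "conf_cycle (Gtil_edges VMax VMin T E w \<rho>) VMin \<sigma>1 c"
  shows "cycle_weight w c < 0"
proof (rule ccontr)
  assume nW: "\<not> cycle_weight w c < 0"
  define k where "k = length c"
  have k: "0 < k" using c unfolding conf_cycle_def k_def by auto
  define nx where "nx i = c ! (Suc i mod k)" for i
  have edge: "(c ! i, nx i) \<in> E" if "i < k" for i
    using c that unfolding conf_cycle_def Gtil_edges_def nx_def k_def by auto
  have conf: "c ! i \<in> VMin \<Longrightarrow> nx i = \<sigma>1 (c ! i)" if "i < k" for i
    using c that unfolding conf_cycle_def nx_def k_def by auto
  have ciG: "c ! i \<in> VMax \<union> VMin" "nx i \<in> G" if "i < k" for i using edge[OF that] E_sub by auto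
  define t where "t i = Vr (c ! i) - real_of_int (w (c ! i) (nx i)) - Vr (nx i)" for i
  have tnn: "0 \<le> t i" if i: "i < k" for i
  proof (cases "c ! i \<in> VMax")
    case True then show ?thesis using Max_ineq[OF True edge[OF i]] unfolding t_def by simp
  next
    case False
    then have vm: "c ! i \<in> VMin" using ciG[OF i] by auto
    let ?v = "c ! i"
    have m: "\<forall>u''\<in>set_pmf (\<rho> ?v). real_of_int (w ?v (nx i)) + Vr (nx i) \<le> real_of_int (w ?v u'') + Vr u''"
      using sigma1 vm conf[OF i vm] Etil_iff[OF vm] by auto
    have "real_of_int (w ?v (nx i)) + Vr (nx i) = (\<Sum>u\<in>G. pmf (\<rho> ?v) u * (real_of_int (w ?v (nx i)) + Vr (nx i)))"
      using rho_sum1[OF vm] sum_distrib_right[where f="pmf (\<rho> ?v)" and A=G and r="real_of_int (w ?v (nx i)) + Vr (nx i)", symmetric]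
      by (simp only: mult_1_left)
    also have "\<dots> \<le> (\<Sum>u\<in>G. pmf (\<rho> ?v) u * (real_of_int (w ?v u) + Vr u))"
    proof (intro sum_mono)
      fix u assume "u \<in> G"
      show "pmf (\<rho> ?v) u * (real_of_int (w ?v (nx i)) + Vr (nx i)) \<le> pmf (\<rho> ?v) u * (real_of_int (w ?v u) + Vr u)"
      proof (cases "u \<in> set_pmf (\<rho> ?v)")
        case True then show ?thesis using m by (intro mult_left_mono) auto
      next
        case False then show ?thesis by (simp add: set_pmf_eq)
      qed
    qed
    also have "\<dots> \<le> Vr ?v" using Min_ineq[OF vm] .
    finally show ?thesis unfolding t_def by simp
  qed
  have sumt: "(\<Sum>i<k. t i) = - real_of_int (cycle_weight w c)"
  proof -
    have r: "(\<Sum>i<k. Vr (nx i)) = (\<Sum>i<k. Vr (c ! i))"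
      unfolding nx_def using sum_rotate[OF k, of "\<lambda>i. Vr (c ! i)"] by simp
    have "(\<Sum>i<k. t i) = (\<Sum>i<k. Vr (c ! i)) - (\<Sum>i<k. real_of_int (w (c ! i) (nx i))) - (\<Sum>i<k. Vr (nx i))"
      unfolding t_def by (simp add: sum_subtractf)
    also have "\<dots> = - (\<Sum>i<k. real_of_int (w (c ! i) (nx i)))" using r by simp
    also have "\<dots> = - real_of_int (cycle_weight w c)"
      unfolding cycle_weight_def k_def nx_def by simp
    finally show ?thesis .
  qed
  have t0: "t i = 0" if "i < k" for i
  proof -
    have "(\<Sum>i<k. t i) \<le> 0" using sumt nW by simp
    moreover have "0 \<le> (\<Sum>i<k. t i)" using tnn by (intro sum_nonneg) auto
    ultimately have "(\<Sum>i<k. t i) = 0" by simp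
    then show ?thesis using sum_nonneg_eq_0_iff[of "{..<k}" t] tnn that by auto
  qed
  have dec: "dn (nx i) < dn (c ! i)" if i: "i < k" for i
  proof (cases "c ! i \<in> VMax")
    case True then show ?thesis using dn_Max[OF True edge[OF i]] by simp
  next
    case False
    then have vm: "c ! i \<in> VMin" using ciG[OF i] by auto
    let ?v = "c ! i"
    let ?m = "real_of_int (w ?v (nx i)) + Vr (nx i)"
    have m: "\<forall>u''\<in>set_pmf (\<rho> ?v). ?m \<le> real_of_int (w ?v u'') + Vr u''"
      using sigma1 vm conf[OF i vm] Etil_iff[OF vm] by auto
    have Vv: "Vr ?v = ?m" using t0[OF i] unfolding t_def by simp
    have allEtil: "u \<in> Etil VMax VMin T E w \<rho> ?v" if u: "u \<in> set_pmf (\<rho> ?v)" for u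
    proof -
      have eqS: "(\<Sum>u\<in>G. pmf (\<rho> ?v) u * (real_of_int (w ?v u) + Vr u - ?m))
          = (\<Sum>u\<in>G. pmf (\<rho> ?v) u * (real_of_int (w ?v u) + Vr u)) - (\<Sum>u\<in>G. pmf (\<rho> ?v) u) * ?m"
        by (simp only: right_diff_distrib sum_subtractf sum_distrib_right)
      have le0: "(\<Sum>u\<in>G. pmf (\<rho> ?v) u * (real_of_int (w ?v u) + Vr u - ?m)) \<le> 0"
        unfolding eqS rho_sum1[OF vm] using Min_ineq[OF vm] Vv by simp
      have nn: "0 \<le> pmf (\<rho> ?v) u' * (real_of_int (w ?v u') + Vr u' - ?m)" if "u' \<in> G" for u'
      proof (cases "u' \<in> set_pmf (\<rho> ?v)")
        case True then show ?thesis using m by (intro mult_nonneg_nonneg) auto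
      next
        case False then show ?thesis by (simp add: set_pmf_eq)
      qed
      have ge0: "0 \<le> (\<Sum>u\<in>G. pmf (\<rho> ?v) u * (real_of_int (w ?v u) + Vr u - ?m))"
        by (rule sum_nonneg) (rule nn)
      have s0: "(\<Sum>u\<in>G. pmf (\<rho> ?v) u * (real_of_int (w ?v u) + Vr u - ?m)) = 0"
        using le0 ge0 by linarith
      have uG: "u \<in> G" using rho_G[OF vm] u by blast
      have "\<forall>x\<in>G. pmf (\<rho> ?v) x * (real_of_int (w ?v x) + Vr x - ?m) = 0"
        using iffD1[OF sum_nonneg_eq_0_iff[OF finG nn] s0] .
      then have "pmf (\<rho> ?v) u * (real_of_int (w ?v u) + Vr u - ?m) = 0" using uG by blast
      moreover have "0 < pmf (\<rho> ?v) u" using u by (simp add: pmf_positive)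
      ultimately have equ: "real_of_int (w ?v u) + Vr u = ?m" by simp
      have "\<forall>u''\<in>set_pmf (\<rho> ?v). real_of_int (w ?v u) + Vr u \<le> real_of_int (w ?v u'') + Vr u''"
        unfolding equ using m .
      then show ?thesis unfolding Etil_iff[OF vm] using u by blast
    qed
    have le: "dn (nx i) \<le> dn u" if u: "u \<in> set_pmf (\<rho> ?v)" for u
    proof -
      have "attr_dist VMax VMin T E \<rho> (nx i) \<le> attr_dist VMax VMin T E \<rho> u"
        using sigma1 vm conf[OF i vm] allEtil[OF u] by auto
      moreover have "u \<in> G" using rho_G[OF vm] u by auto
      ultimately show ?thesis using d_dn ciG(2)[OF i] by (metis enat_ord_simps(1))
    qed
    obtain u0 where u0: "u0 \<in> set_pmf (\<rho> ?v)" "dn ?v = Suc (dn u0)" using dn_Min[OF vm] by blast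
    show ?thesis using le[OF u0(1)] u0(2) by simp
  qed
  have "(\<Sum>i<k. dn (nx i)) < (\<Sum>i<k. dn (c ! i))"
    using k dec by (intro sum_strict_mono) auto
  moreover have "(\<Sum>i<k. dn (nx i)) = (\<Sum>i<k. dn (c ! i))"
    unfolding nx_def using sum_rotate[OF k, of "\<lambda>i. dn (c ! i)"] by simp
  ultimately show False by simp
qed

end

theorem lemma22:
  fixes VMax VMin T :: "'v set" and E :: "('v \<times> 'v) set" and w :: "'v \<Rightarrow> 'v \<Rightarrow> int"
    and \<rho> :: "'v \<Rightarrow> 'v pmf" and \<sigma>1 :: "'v \<Rightarrow> 'v"
  assumes game: "spg VMax VMin T E"
    and vald: "\<forall>v \<in> VMax \<union> VMin \<union> T. val_d VMax VMin T E w v \<noteq> \<infinity>"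
    and valm: "\<forall>v \<in> VMax \<union> VMin \<union> T. val_m_bar VMax VMin T E w v \<noteq> \<infinity>"
    and rho: "ml_strat E VMin \<rho>"
    and reach: "\<forall>v \<in> VMax \<union> VMin \<union> T. \<forall>\<tau>. ml_strat E VMax \<tau> \<longrightarrow>
                  reach_prob VMax VMin T \<rho> \<tau> v = 1"
    and sigma1: "\<forall>v \<in> VMin. \<sigma>1 v \<in> Etil VMax VMin T E w \<rho> v \<and>
                  (\<forall>u \<in> Etil VMax VMin T E w \<rho> v.
                     attr_dist VMax VMin T E \<rho> (\<sigma>1 v) \<le> attr_dist VMax VMin T E \<rho> u)"
  shows "\<forall>c. conf_cycle (Gtil_edges VMax VMin T E w \<rho>) VMin \<sigma>1 c \<longrightarrow> cycle_weight w c < 0"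
proof -
  interpret G_reach VMax VMin T E w \<rho>
    using game rho reach by (simp add: G_reach_def G_ctx_def G_reach_axioms_def)
  show ?thesis using main[OF sigma1] by blast
qed

end
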